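(* For every positive integer $n$, $$\operatorname{lcm}\left({n\brack 0}_q,{n\brack 1}_q,\ldots,{n\brack n}_q\right)=\prod_{\substack{1\le d\le n\\ d\nmid (n+1)}}\Phi_d(q)=\frac{\operatorname{lcm}([1]_q,\ldots,[n+1]_q)}{[n+1]_q}.$$ *)

theory Defs
  imports Complex_Main "HOL-Computational_Algebra.Polynomial_Factorial" "HOL-Computational_Algebra.Field_as_Ring"
begin

definition qint :: "nat \<Rightarrow> complex poly" where
  "qint m = (\<Sum>i<m. monom 1 i)"

definition qfact :: "nat \<Rightarrow> complex poly" where
  "qfact m = (\<Prod>i=1..m. qint i)"

definition qbinom :: "nat \<Rightarrow> nat \<Rightarrow> complex poly" where
  "qbinom n k = (if k \<le> n then qfact n div (qfact k * qfact (n - k)) else 0)"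

definition cyclo :: "nat \<Rightarrow> complex poly" where
  "cyclo d = (\<Prod>k\<in>{k. 1 \<le> k \<and> k \<le> d \<and> coprime k d}.
                 [:- cis (2 * pi * real k / real d), 1:])"

end

theory Submission imports Defs begin

definition X :: "complex \<Rightarrow> complex poly" where "X z = [:-z,1:]"
definition L :: "complex set \<Rightarrow> complex poly" where "L S = (\<Prod>z\<in>S. X z)"

lemma X_nz[simp]: "X z \<noteq> 0" by (simp add: X_def)
lemma L_nz[simp]: "L S \<noteq> 0" by (cases "finite S") (simp_all add: L_def)

lemma L_lead: "lead_coeff (L S) = 1"
  by (simp add: L_def lead_coeff_prod X_def)

lemma L_norm: "normalize (L S) = L S"
  by (simp add: normalize_poly_eq_map_poly L_lead)

lemma X_dvd: "X z dvd p \<longleftrightarrow> poly p z = 0"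
  by (simp add: X_def poly_eq_0_iff_dvd)

lemma L_dvd: "finite S \<Longrightarrow> (\<forall>z\<in>S. poly p z = 0) \<Longrightarrow> L S dvd p"
proof (induction S rule: finite_induct)
  case empty then show ?case by (simp add: L_def)
next
  case (insert z S)
  have pr: "prime_elem (X z)" unfolding X_def by (rule prime_elem_linear_field_poly) simp
  have "\<not> X z dvd L S"
  proof
    assume "X z dvd L S"
    hence "poly (L S) z = 0" by (simp add: X_dvd)
    thus False using insert(1,2) by (auto simp: L_def poly_prod X_def)
  qed
  hence "coprime (X z) (L S)" using pr prime_elem_imp_coprime by blast
  moreover have "X z dvd p" using insert by (simp add: X_dvd)
  ultimately have "X z * L S dvd p" using insert by (intro divides_mult) auto
  thus ?case using insert by (simp add: L_def)
qed

lemma L_sub: "finite T \<Longrightarrow> S \<subseteq> T \<Longrightarrow> L S dvd L T"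
  unfolding L_def by (rule prod_dvd_prod_subset)

lemma L_root: "finite S \<Longrightarrow> z \<in> S \<Longrightarrow> poly (L S) z = 0"
  by (auto simp: L_def poly_prod X_def)

lemma Lcm_L:
  assumes "finite I" "\<And>i. i \<in> I \<Longrightarrow> finite (A i)"
  shows "Lcm ((\<lambda>i. L (A i)) ` I) = L (\<Union>i\<in>I. A i)"
proof (rule Lcm_eqI)
  have fin: "finite (\<Union>i\<in>I. A i)" using assms by auto
  show "normalize (L (\<Union>i\<in>I. A i)) = L (\<Union>i\<in>I. A i)" by (rule L_norm)
  show "b dvd L (\<Union>i\<in>I. A i)" if "b \<in> (\<lambda>i. L (A i)) ` I" for b
    using that fin by (auto intro!: L_sub)
  show "L (\<Union>i\<in>I. A i) dvd c" if h: "\<And>b. b \<in> (\<lambda>i. L (A i)) ` I \<Longrightarrow> b dvd c" for c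
  proof (rule L_dvd[OF fin], safe)
    fix i z assume "i \<in> I" "z \<in> A i"
    have "X z dvd L (A i)" using \<open>z \<in> A i\<close> assms(2)[OF \<open>i \<in> I\<close>] by (simp add: X_dvd L_root)
    also have "L (A i) dvd c" using h \<open>i \<in> I\<close> by auto
    finally show "poly c z = 0" by (simp add: X_dvd)
  qed
qed

lemma degree_L: "finite S \<Longrightarrow> degree (L S) = card S"
  by (simp add: L_def degree_prod_eq_sum_degree X_def)

lemma qint_mult: "qint m * [:-1,1:] = monom 1 m - 1"
proof (induction m)
  case 0 then show ?case by (simp add: qint_def)
next
  case (Suc m)
  have "qint (Suc m) = qint m + monom 1 m" by (simp add: qint_def)
  hence "qint (Suc m) * [:-1,1:] = qint m * [:-1,1:] + monom 1 m * [:-1,1:]" by (simp add: algebra_simps)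
  also have "monom 1 m * [:-1,1:] = (monom 1 (Suc m) - monom 1 m :: complex poly)"
    proof -
    have H: "\<And>p::complex poly. p * [:-1,1:] = pCons 0 p - p"
      by (simp add: poly_eq_iff coeff_pCons split: nat.split)
    show ?thesis using H[of "monom 1 m"] by (simp only: monom_Suc)
  qed
  finally show ?case using Suc by simp
qed

lemma L_unity:
  assumes "m > 0"
  shows "L {z. z^m = 1} = monom 1 m - 1"
proof -
  let ?S = "{z::complex. z^m = 1}" and ?p = "monom 1 m - 1 :: complex poly"
  have fin: "finite ?S" using assms by (simp add: finite_roots_unity)
  have "L ?S dvd ?p" by (rule L_dvd[OF fin]) (simp add: poly_monom)
  then obtain r where r: "?p = L ?S * r" by (elim dvdE)
  have dp: "degree ?p = m"
  proof -
    have "?p = monom 1 m + (- 1)" by simp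
    also have "degree \<dots> = degree (monom 1 m :: complex poly)"
      using assms by (intro degree_add_eq_left) (simp add: degree_monom_eq)
    finally show ?thesis by (simp add: degree_monom_eq)
  qed
  have lp: "lead_coeff ?p = 1" using assms dp by (simp add: degree_monom_eq)
  have "?p \<noteq> 0" using dp assms by auto
  hence rnz: "r \<noteq> 0" using r by auto
  have dl: "degree (L ?S) = m" using degree_L[OF fin] card_roots_unity_eq[OF assms] by simp
  have "degree ?p = degree (L ?S) + degree r" using r rnz by (simp add: degree_mult_eq)
  hence "degree r = 0" using dp dl by simp
  then obtain c where c: "r = [:c:]" by (elim degree_eq_zeroE)
  have "lead_coeff ?p = lead_coeff (L ?S) * lead_coeff r" using r by (simp add: lead_coeff_mult)
  hence "c = 1" using lp L_lead c by simp
  thus ?thesis using r c by simp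
qed

definition w :: "nat \<Rightarrow> complex" where "w d = cis (2 * pi / real d)"

lemma w_pow: "w d ^ k = cis (2 * pi * real k / real d)"
  by (simp add: w_def DeMoivre mult_ac)

lemma w_nz[simp]: "w d \<noteq> 0" by (simp add: w_def)

lemma w_pow_d: "d > 0 \<Longrightarrow> w d ^ d = 1"
  by (simp add: w_pow complex_eq_iff)

lemma w_pow_eq1:
  assumes "d > 0"
  shows "w d ^ m = 1 \<longleftrightarrow> d dvd m"
proof
  assume "d dvd m" then obtain q where "m = d * q" by blast
  thus "w d ^ m = 1" by (simp add: power_mult w_pow_d assms)
next
  assume h: "w d ^ m = 1"
  have "w d ^ m = w d ^ (d * (m div d) + m mod d)" by simp
  also have "\<dots> = w d ^ (m mod d)" by (simp only: power_add power_mult w_pow_d[OF assms] power_one mult_1)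
  finally have "w d ^ (m mod d) = w d ^ 0" using h by simp
  moreover have "inj_on (\<lambda>k. cis (2 * pi * real k / real d)) {..<d}"
    using bij_betw_roots_unity[OF assms] by (simp add: bij_betw_def)
  ultimately have "m mod d = 0"
  proof -
    assume e: "w d ^ (m mod d) = w d ^ 0" and i: "inj_on (\<lambda>k. cis (2 * pi * real k / real d)) {..<d}"
    from e have "(\<lambda>k. cis (2 * pi * real k / real d)) (m mod d) = (\<lambda>k. cis (2 * pi * real k / real d)) 0"
      unfolding w_pow by simp
    from inj_onD[OF i this] show ?thesis using assms by simp
  qed
  thus "d dvd m" by auto
qed

definition prim :: "nat \<Rightarrow> complex set" where
  "prim d = {z. z^d = 1 \<and> (\<forall>e. 0 < e \<and> e < d \<longrightarrow> z^e \<noteq> 1)}"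

lemma prim_fin: "d > 0 \<Longrightarrow> finite (prim d)"
  by (rule finite_subset[of _ "{z. z^d = 1}"]) (auto simp: prim_def finite_roots_unity)

lemma prim_disj: "d > 0 \<Longrightarrow> d' > 0 \<Longrightarrow> d \<noteq> d' \<Longrightarrow> prim d \<inter> prim d' = {}"
  unfolding prim_def by (auto simp: neq_iff)

lemma prim_fin': "d \<noteq> 0 \<Longrightarrow> finite (prim d)" using prim_fin by simp
lemma prim_disj': "d \<noteq> d' \<Longrightarrow> z \<in> prim d \<Longrightarrow> z \<in> prim d' \<Longrightarrow> d \<noteq> 0 \<Longrightarrow> d' \<noteq> 0 \<Longrightarrow> False"
  using prim_disj[of d d'] by auto

lemma prim_1: "prim 1 = {1}" by (auto simp: prim_def)

lemma cyclo_L: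
  assumes d: "d > 0"
  shows "cyclo d = L (prim d)"
proof -
  let ?K = "{k. 1 \<le> k \<and> k \<le> d \<and> coprime k d}"
  have c: "cyclo d = (\<Prod>k\<in>?K. X (w d ^ k))" by (simp add: cyclo_def X_def w_pow)
  have inj: "inj_on (\<lambda>k. w d ^ k) ?K"
  proof (rule inj_onI)
    fix a b assume a: "a \<in> ?K" and b: "b \<in> ?K" and e: "w d ^ a = w d ^ b"
    show "a = b"
    proof (rule ccontr)
      assume "a \<noteq> b"
      then consider "a < b" | "b < a" by linarith
      thus False
      proof cases
        case 1
        have "w d ^ b = w d ^ a * w d ^ (b - a)" using 1 by (simp add: power_add[symmetric])
        hence "w d ^ (b - a) = 1" using e by simp
        hence "d dvd b - a" using w_pow_eq1[OF d] by simp
        thus False using 1 a b by (auto dest: dvd_imp_le)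
      next
        case 2
        have "w d ^ a = w d ^ b * w d ^ (a - b)" using 2 by (simp add: power_add[symmetric])
        hence "w d ^ (a - b) = 1" using e by simp
        hence "d dvd a - b" using w_pow_eq1[OF d] by simp
        thus False using 2 a b by (auto dest: dvd_imp_le)
      qed
    qed
  qed
  have img: "(\<lambda>k. w d ^ k) ` ?K = prim d"
  proof safe
    fix k assume k: "1 \<le> k" "k \<le> d" "coprime k d"
    show "w d ^ k \<in> prim d" unfolding prim_def
    proof safe
      show "(w d ^ k) ^ d = 1" by (simp add: power_mult[symmetric] mult.commute power_mult w_pow_d d)
      fix e assume e: "0 < e" "e < d" "(w d ^ k) ^ e = 1"
      hence "d dvd k * e" using w_pow_eq1[OF d] by (simp add: power_mult[symmetric])
      hence "d dvd e" using k(3) by (metis coprime_commute coprime_dvd_mult_right_iff)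
      thus False using e by (auto dest: dvd_imp_le)
    qed
  next
    fix z assume z: "z \<in> prim d"
    hence "z \<in> {z. z^d = 1}" by (simp add: prim_def)
    then obtain j where j: "j < d" "z = w d ^ j"
      using bij_betw_roots_unity[OF d] unfolding bij_betw_def w_pow by auto
    define k where "k = (if j = 0 then d else j)"
    have zk: "z = w d ^ k" using j by (simp add: k_def w_pow_d d)
    have k1: "1 \<le> k" "k \<le> d" using j d by (auto simp: k_def)
    define g where "g = gcd k d"
    have g0: "g > 0" using d by (simp add: g_def)
    have "z ^ (d div g) = w d ^ (k * (d div g))" by (simp add: zk power_mult)
    also have "k * (d div g) = d * (k div g)"
      by (simp add: g_def div_mult_swap dvd_div_mult mult.commute)
    also have "w d ^ \<dots> = 1" using w_pow_eq1[OF d] by simp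
    finally have zz: "z ^ (d div g) = 1" .
    have "g = 1"
    proof (rule ccontr)
      assume "g \<noteq> 1"
      hence "g > 1" using g0 by simp
      hence "d div g < d" using d by simp
      moreover have "d div g > 0" using g0 d by (simp add: g_def div_greater_zero_iff gcd_le2_nat)
      ultimately show False using z zz by (auto simp: prim_def)
    qed
    hence "coprime k d" by (simp add: g_def coprime_iff_gcd_eq_1)
    thus "z \<in> (\<lambda>k. w d ^ k) ` ?K" using zk k1 by blast
  qed
  have "cyclo d = (\<Prod>z\<in>(\<lambda>k. w d ^ k) ` ?K. X z)" using c prod.reindex[OF inj, of X] by simp
  thus ?thesis using img by (simp add: L_def)
qed

lemma unity_union:
  assumes m: "m > 0"
  shows "(\<Union>d\<in>{d. d dvd m}. prim d) = {z. z^m = 1}"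
proof safe
  fix d z assume "d dvd m" "z \<in> prim d"
  then obtain q where "m = d * q" "z^d = 1" by (auto simp: prim_def)
  thus "z^m = 1" by (simp add: power_mult)
next
  fix z :: complex assume z: "z^m = 1"
  define d where "d = (LEAST e. 0 < e \<and> z^e = 1)"
  have P: "0 < d \<and> z^d = 1" unfolding d_def by (rule LeastI[of _ m]) (use m z in auto)
  have mn: "\<And>e. 0 < e \<and> z^e = 1 \<Longrightarrow> d \<le> e" unfolding d_def by (rule Least_le)
  have zp: "z \<in> prim d" using P mn by (force simp: prim_def)
  have "z^m = z^(d * (m div d) + m mod d)" by simp
  also have "\<dots> = z^(m mod d)" using P by (simp only: power_add power_mult power_one mult_1)
  finally have "z^(m mod d) = 1" using z by simp
  hence "m mod d = 0" using mn[of "m mod d"] P by (meson mod_less_divisor not_gr0 not_le)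
  hence "d dvd m" by auto
  thus "z \<in> (\<Union>d\<in>{d. d dvd m}. prim d)" using zp by blast
qed

definition CP :: "nat set \<Rightarrow> complex poly" where "CP D = (\<Prod>d\<in>D. cyclo d)"

definition R :: "nat set \<Rightarrow> complex set" where "R D = (\<Union>d\<in>D. prim d)"

lemma R_fin: "finite D \<Longrightarrow> 0 \<notin> D \<Longrightarrow> finite (R D)"
  unfolding R_def by (auto intro!: prim_fin' gr0I)

lemma CP_L:
  assumes "finite D" "0 \<notin> D"
  shows "CP D = L (R D)"
proof -
  have "L (R D) = (\<Prod>d\<in>D. L (prim d))"
    unfolding L_def R_def
    apply (rule prod.UNION_disjoint)
    using assms apply (auto intro!: prim_fin' gr0I)
    by (metis prim_disj')
  also have "\<dots> = CP D" unfolding CP_def using assms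
    by (intro prod.cong refl) (metis cyclo_L gr0I)
  finally show ?thesis by simp
qed

lemma qint_CP:
  assumes m: "m > 0"
  shows "qint m = CP {d. d dvd m \<and> d \<noteq> 1}"
proof -
  let ?U = "{z::complex. z^m = 1}"
  have fin: "finite ?U" using m by (simp add: finite_roots_unity)
  have "L ?U = X 1 * L (?U - {1})" unfolding L_def using fin
    by (subst prod.remove[of _ 1]) auto
  moreover have "L ?U = qint m * X 1" using L_unity[OF m] qint_mult by (simp add: X_def)
  ultimately have q: "qint m = L (?U - {1})" by (simp add: mult.commute)
  have D: "finite {d. d dvd m \<and> d \<noteq> 1}" "0 \<notin> {d. d dvd m \<and> d \<noteq> 1}" using m by auto
  have "R {d. d dvd m \<and> d \<noteq> 1} = ?U - {1}"
  proof
    show "R {d. d dvd m \<and> d \<noteq> 1} \<subseteq> ?U - {1}"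
    proof
      fix z assume "z \<in> R {d. d dvd m \<and> d \<noteq> 1}"
      then obtain d where d: "d dvd m" "d \<noteq> 1" "z \<in> prim d" by (auto simp: R_def)
      have "d > 0" using d m by (auto intro!: gr0I)
      hence "z \<notin> prim 1" using prim_disj[of d 1] d by auto
      moreover have "z \<in> ?U" using unity_union[OF m] d by blast
      ultimately show "z \<in> ?U - {1}" using prim_1 by auto
    qed
    show "?U - {1} \<subseteq> R {d. d dvd m \<and> d \<noteq> 1}"
    proof
      fix z assume z: "z \<in> ?U - {1}"
      then obtain d where d: "d dvd m" "z \<in> prim d" using unity_union[OF m] by blast
      have "d \<noteq> 1" using d z prim_1 by auto
      thus "z \<in> R {d. d dvd m \<and> d \<noteq> 1}" using d by (auto simp: R_def)
    qed
  qed
  thus ?thesis using q CP_L[OF D] by simp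
qed

lemma qint_pow:
  assumes "1 \<le> m" "m \<le> N"
  shows "qint m = (\<Prod>d\<in>{2..N}. cyclo d ^ (if d dvd m then 1 else 0))"
proof -
  have "(\<Prod>d\<in>{2..N}. cyclo d ^ (if d dvd m then 1 else 0)) = (\<Prod>d\<in>{2..N}. if d dvd m then cyclo d else 1)"
    by (intro prod.cong) auto
  also have "\<dots> = (\<Prod>d\<in>{d\<in>{2..N}. d dvd m}. cyclo d)" by (rule prod.inter_filter[symmetric]) simp
  also have "{d\<in>{2..N}. d dvd m} = {d. d dvd m \<and> d \<noteq> 1}"
  proof safe
    fix d assume "d dvd m" "d \<noteq> 1"
    moreover have "d \<le> m" using \<open>d dvd m\<close> assms by (auto intro: dvd_imp_le)
    moreover have "d \<noteq> 0" using \<open>d dvd m\<close> assms by auto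
    ultimately show "d \<in> {2..N}" using assms by auto
  qed auto
  finally show ?thesis using qint_CP[of m] assms by (simp add: CP_def)
qed

lemma qfact_pow:
  "m \<le> N \<Longrightarrow> qfact m = (\<Prod>d\<in>{2..N}. cyclo d ^ (m div d))"
proof (induction m)
  case 0 then show ?case by (simp add: qfact_def)
next
  case (Suc m)
  have "qfact (Suc m) = qfact m * qint (Suc m)" by (simp add: qfact_def)
  also have "\<dots> = (\<Prod>d\<in>{2..N}. cyclo d ^ (m div d) * cyclo d ^ (if d dvd Suc m then 1 else 0))"
    using Suc qint_pow[of "Suc m" N] by (simp add: prod.distrib)
  also have "\<dots> = (\<Prod>d\<in>{2..N}. cyclo d ^ (Suc m div d))"
  proof (intro prod.cong refl)
    fix d assume "d \<in> {2..N}"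
    hence "Suc m div d = m div d + (if d dvd Suc m then 1 else 0)" by (auto simp: div_Suc dvd_eq_mod_eq_0)
    thus "cyclo d ^ (m div d) * cyclo d ^ (if d dvd Suc m then 1 else 0) = cyclo d ^ (Suc m div d)"
      by (simp add: power_add)
  qed
  finally show ?case .
qed

definition B :: "nat \<Rightarrow> nat \<Rightarrow> nat set" where
  "B n k = {d\<in>{2..n}. (k mod d + (n - k) mod d) div d = 1}"

lemma c_le1: "d > 0 \<Longrightarrow> (a mod d + b mod d) div d \<le> (1::nat)" for a b d :: nat
proof -
  assume d: "d > 0"
  have "a mod d < d" "b mod d < d" using d by auto
  hence "a mod d + b mod d < 2 * d" by linarith
  hence "(a mod d + b mod d) div d < 2" using d by (simp add: div_less_iff_less_mult mult.commute)
  thus ?thesis by simp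
qed

lemma cyclo_nz: "cyclo d \<noteq> 0"
  by (simp add: cyclo_def)

lemma qbinom_CP:
  assumes "k \<le> n"
  shows "qbinom n k = CP (B n k)"
proof -
  let ?c = "\<lambda>d. (k mod d + (n - k) mod d) div d"
  have "qfact n = (\<Prod>d\<in>{2..n}. cyclo d ^ (k div d + (n - k) div d + ?c d))"
    using qfact_pow[of n n] div_add1_eq[of k "n - k"] assms by simp
  also have "\<dots> = qfact k * qfact (n - k) * (\<Prod>d\<in>{2..n}. cyclo d ^ ?c d)"
    using qfact_pow[of k n] qfact_pow[of "n - k" n] assms by (simp add: power_add prod.distrib)
  finally have f: "qfact n = qfact k * qfact (n - k) * (\<Prod>d\<in>{2..n}. cyclo d ^ ?c d)" .
  have nz: "qfact k * qfact (n - k) \<noteq> 0"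
    using qfact_pow[of k n] qfact_pow[of "n - k" n] assms by (simp add: cyclo_nz)
  have "qbinom n k = (\<Prod>d\<in>{2..n}. cyclo d ^ ?c d)"
    unfolding qbinom_def using assms f nz by simp
  also have "\<dots> = (\<Prod>d\<in>{2..n}. if ?c d = 1 then cyclo d else 1)"
  proof (intro prod.cong refl)
    fix d assume "d \<in> {2..n}"
    hence "?c d \<le> 1" by (intro c_le1) auto
    thus "cyclo d ^ ?c d = (if ?c d = 1 then cyclo d else 1)" by (cases "?c d") auto
  qed
  also have "\<dots> = CP (B n k)" unfolding CP_def B_def by (rule prod.inter_filter[symmetric]) simp
  finally show ?thesis .
qed

lemma comb:
  fixes n d :: nat
  assumes "2 \<le> d" "d \<le> n"
  shows "(\<exists>k\<in>{0..n}. (k mod d + (n - k) mod d) div d = 1) \<longleftrightarrow> \<not> d dvd (n + 1)"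
proof
  assume "\<exists>k\<in>{0..n}. (k mod d + (n - k) mod d) div d = 1"
  then obtain k where k: "k \<le> n" "(k mod d + (n - k) mod d) div d = 1" by auto
  have m: "(k mod d + (n - k) mod d) mod d = n mod d" using k(1) by (simp add: mod_add_eq)
  have s: "k mod d + (n - k) mod d = d + n mod d"
    using div_mult_mod_eq[of "k mod d + (n - k) mod d" d] k(2) m by simp
  have "k mod d < d" "(n - k) mod d < d" using assms by auto
  show "\<not> d dvd (n + 1)"
  proof
    assume "d dvd n + 1"
    hence "(n + 1) mod d = 0" by simp
    hence "n mod d = d - 1" using assms
      by (simp add: mod_Suc split: if_splits)
    thus False using s \<open>k mod d < d\<close> \<open>(n - k) mod d < d\<close> by linarith
  qed
next
  assume nd: "\<not> d dvd (n + 1)"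
  let ?k = "d - 1"
  have k1: "?k mod d = d - 1" using assms by simp
  have "(n - ?k) mod d \<noteq> 0"
  proof
    assume "(n - ?k) mod d = 0"
    hence "d dvd (n - ?k) + d" by auto
    moreover have "n - ?k + d = n + 1" using assms by simp
    ultimately show False using nd by simp
  qed
  hence "(n - ?k) mod d \<ge> 1" by simp
  hence ge: "?k mod d + (n - ?k) mod d \<ge> d" using k1 assms by linarith
  have "(?k mod d + (n - ?k) mod d) div d \<ge> 1" using ge assms
    by (simp add: div_le_mono le_div_geq)
  moreover have "(?k mod d + (n - ?k) mod d) div d \<le> 1" using assms by (intro c_le1) auto
  ultimately have "(?k mod d + (n - ?k) mod d) div d = 1" by simp
  moreover have "?k \<in> {0..n}" using assms by simp
  ultimately show "\<exists>k\<in>{0..n}. (k mod d + (n - k) mod d) div d = 1" by blast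
qed

lemma R_UN: "R (\<Union>i\<in>I. D i) = (\<Union>i\<in>I. R (D i))"
  by (auto simp: R_def)

theorem mainTheorem2:
  fixes n :: nat
  assumes "n \<ge> 1"
  shows "Lcm (qbinom n ` {0..n}) = (\<Prod>d\<in>{d. 1 \<le> d \<and> d \<le> n \<and> \<not> d dvd (n + 1)}. cyclo d)
       \<and> (\<Prod>d\<in>{d. 1 \<le> d \<and> d \<le> n \<and> \<not> d dvd (n + 1)}. cyclo d)
           = Lcm (qint ` {1..n + 1}) div qint (n + 1)"
proof
  let ?S = "{d. 1 \<le> d \<and> d \<le> n \<and> \<not> d dvd (n + 1)}"
  have Sfin: "finite ?S" "0 \<notin> ?S" by auto
  have BS: "(\<Union>k\<in>{0..n}. B n k) = ?S"
  proof safe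
    fix k d assume "k \<in> {0..n}" "d \<in> B n k"
    hence d: "2 \<le> d" "d \<le> n" "k \<in> {0..n}" "(k mod d + (n - k) mod d) div d = 1" by (auto simp: B_def)
    show "1 \<le> d" "d \<le> n" using d by auto
    show "d dvd n + 1 \<Longrightarrow> False" using comb[OF d(1,2)] d(3,4) by blast
  next
    fix d assume d: "1 \<le> d" "d \<le> n" "\<not> d dvd (n + 1)"
    hence "d \<noteq> 1" by auto
    hence d2: "2 \<le> d" using d by simp
    then obtain k where "k \<in> {0..n}" "(k mod d + (n - k) mod d) div d = 1" using comb[OF d2 d(2)] d(3) by blast
    thus "d \<in> (\<Union>k\<in>{0..n}. B n k)" using d d2 by (auto simp: B_def)
  qed
  have Bf: "finite (B n k)" "0 \<notin> B n k" for k by (auto simp: B_def)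
  have "qbinom n ` {0..n} = (\<lambda>k. L (R (B n k))) ` {0..n}"
    by (intro image_cong refl) (simp add: qbinom_CP CP_L[OF Bf])
  hence "Lcm (qbinom n ` {0..n}) = L (\<Union>k\<in>{0..n}. R (B n k))"
    by (simp add: Lcm_L R_fin[OF Bf])
  also have "\<dots> = L (R ?S)" unfolding BS[symmetric] R_UN ..
  also have "\<dots> = CP ?S" by (rule CP_L[OF Sfin, symmetric])
  finally show "Lcm (qbinom n ` {0..n}) = (\<Prod>d\<in>?S. cyclo d)" by (simp add: CP_def)
  define Dv where "Dv m = {d. d dvd m \<and> d \<noteq> (1::nat)}" for m
  have Dvf: "finite (Dv m)" "0 \<notin> Dv m" if "m > 0" for m using that by (auto simp: Dv_def)
  have "qint ` {1..n+1} = (\<lambda>m. L (R (Dv m))) ` {1..n+1}"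
  proof (intro image_cong refl)
    fix m assume "m \<in> {1..n+1}"
    hence m: "m > 0" by simp
    have "qint m = CP (Dv m)" using qint_CP[OF m] by (simp add: Dv_def)
    thus "qint m = L (R (Dv m))" using CP_L[OF Dvf[OF m]] by simp
  qed
  hence "Lcm (qint ` {1..n+1}) = L (\<Union>m\<in>{1..n+1}. R (Dv m))"
    using Lcm_L[of "{1..n+1}" "\<lambda>m. R (Dv m)"] R_fin[OF Dvf] by simp
  also have "(\<Union>m\<in>{1..n+1}. Dv m) = {2..n+1}"
  proof safe
    fix m d assume "m \<in> {1..n+1}" "d \<in> Dv m"
    hence "d dvd m" "d \<noteq> 1" "1 \<le> m" "m \<le> n + 1" by (auto simp: Dv_def)
    moreover have "d \<le> m" using calculation by (auto intro: dvd_imp_le)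
    moreover have "d \<noteq> 0" using calculation by auto
    ultimately show "d \<in> {2..n+1}" by auto
  next
    fix d assume "d \<in> {2..n+1}"
    thus "d \<in> (\<Union>m\<in>{1..n+1}. Dv m)" by (auto simp: Dv_def intro!: bexI[of _ d])
  qed
  hence "(\<Union>m\<in>{1..n+1}. R (Dv m)) = R {2..n+1}" by (simp add: R_UN[symmetric])
  also have "L (R {2..n+1}) = CP {2..n+1}" by (simp add: CP_L)
  also have "{2..n+1} = Dv (n+1) \<union> ?S"
  proof (rule set_eqI)
    fix x
    show "x \<in> {2..n+1} \<longleftrightarrow> x \<in> Dv (n+1) \<union> ?S"
    proof (cases "x dvd n + 1")
      case True
      hence "x \<le> n + 1" "x \<noteq> 0" by (auto intro: dvd_imp_le gr0I)
      thus ?thesis using True by (auto simp: Dv_def)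
    next
      case False
      hence "x \<noteq> n + 1" "x \<noteq> 1" by auto
      thus ?thesis using False by (auto simp: Dv_def)
    qed
  qed
  also have "CP (Dv (n+1) \<union> ?S) = CP (Dv (n+1)) * CP ?S"
    unfolding CP_def by (rule prod.union_disjoint) (auto simp: Dv_def)
  also have "CP (Dv (n+1)) = qint (n+1)" by (simp add: qint_CP Dv_def)
  finally have "Lcm (qint ` {1..n+1}) = qint (n+1) * CP ?S" .
  moreover have "qint (n+1) \<noteq> 0" by (simp add: qint_CP CP_def cyclo_nz)
  ultimately show "(\<Prod>d\<in>?S. cyclo d) = Lcm (qint ` {1..n + 1}) div qint (n + 1)"
    by (simp add: CP_def)
qed

end
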